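(* Let $n,d\ge 1$, let $\mathbb{D}^n=\{0,1,\dots,d-1\}^n$, and let $W$ be the complex Hilbert space of dimension $d^n$ with orthonormal (standard) basis $\{v_x\}_{x\in\mathbb{D}^n}$. Let $F:\mathbb{D}^n\to\mathbb{R}$ be an objective function and let $H_P$ be the problem Hamiltonian representing $F$, i.e. the linear operator with $H_P(v_x)=F(x)v_x$ for all $x\in\mathbb{D}^n$. Let $K$ be a group acting linearly and unitarily on $W$ such that every element of $K$ commutes with $H_P$ (i.e. $K$ is a group of symmetries of $H_P$, not necessarily all of them), and let $$W=\bigoplus_i W_i,\qquad W_i=V_i^{\oplus m_i},$$ be the decomposition of $W$ into isotypic components, where $V_i$ ranges over the pairwise non-isomorphic irreducible representations of $K$ occurring in $W$ and $m_i$ is the multiplicity of $V_i$. Fix an index $i$ and suppose $H_{M,i}$ is a Hamiltonian on $W$ such that (1) the matrix of $H_{M,i}$ in the standard basis satisfies the hypotheses of the Perron–Frobenius theorem (it is a real matrix with nonnegative entries that is irreducible, i.e. it leaves no proper nonzero coordinate subspace invariant); (2) the lowest-energy eigenspace of $H_{M,i}$ is one-dimensional and contained in $W_i$; and (3) $H_{M,i}$ preserves the decomposition $W=\bigoplus_j W_j$, i.e. $H_{M,i}(W_j)\subseteq W_j$ for all $j$. Let $\xi_i$ be a unit vector spanning the lowest-energy eigenspace of $H_{M,i}$. Then one obtains a reduced QAOA with problem Hamiltonian $H_P$, mixer Hamiltonian $H_{M,i}$ and initial state $\xi_i$ whose ambient Hilbert space is $W_i$: for every $p\ge 1$ and all real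 parameters $\beta_1,\gamma_1,\dots,\beta_p,\gamma_p$, the state $$e^{-i\beta_1 H_{M,i}}e^{-i\gamma_1 H_P}\cdots e^{-i\beta_p H_{M,i}}e^{-i\gamma_p H_P}\,\xi_i$$ lies in $W_i$.
   Context: QAOA (Quantum Approximate Optimization Algorithm) of depth $p$ with problem Hamiltonian $H_P$, mixer Hamiltonian $H_M$ and initial state $\xi$ (a lowest-energy state of $H_M$) prepares the state $e^{-i\beta_1 H_M}e^{-i\gamma_1 H_P}\cdots e^{-i\beta_p H_M}e^{-i\gamma_p H_P}\xi$ for real parameters $\beta_j,\gamma_j$, and then measures in the standard basis. *)

theory Defs
  imports Complex_Main "HOL-Algebra.Group"
begin

text \<open>The Hilbert space W of dimension d^n is modelled concretely: the basis is indexed by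
  D^n = {0,...,d-1}^n (lists of length n with entries < d); vectors are functions
  nat list => complex vanishing outside D^n; operators are matrices
  nat list => nat list => complex (entries outside D^n x D^n irrelevant/zero).\<close>

type_synonym cvec = "nat list \<Rightarrow> complex"
type_synonym cop = "nat list \<Rightarrow> nat list \<Rightarrow> complex"

definition Dn :: "nat \<Rightarrow> nat \<Rightarrow> nat list set" where
  "Dn d n = {x. length x = n \<and> (\<forall>a\<in>set x. a < d)}"

definition inW :: "nat \<Rightarrow> nat \<Rightarrow> cvec \<Rightarrow> bool" where
  "inW d n v \<longleftrightarrow> (\<forall>x. x \<notin> Dn d n \<longrightarrow> v x = 0)"

definition is_op :: "nat \<Rightarrow> nat \<Rightarrow> cop \<Rightarrow> bool" where
  "is_op d n A \<longleftrightarrow> (\<forall>x y. x \<notin> Dn d n \<or> y \<notin> Dn d n \<longrightarrow> A x y = 0)"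

definition op_apply :: "nat \<Rightarrow> nat \<Rightarrow> cop \<Rightarrow> cvec \<Rightarrow> cvec" where
  "op_apply d n A v = (\<lambda>x. if x \<in> Dn d n then (\<Sum>y\<in>Dn d n. A x y * v y) else 0)"

definition op_mult :: "nat \<Rightarrow> nat \<Rightarrow> cop \<Rightarrow> cop \<Rightarrow> cop" where
  "op_mult d n A B = (\<lambda>x y. if x \<in> Dn d n \<and> y \<in> Dn d n
       then (\<Sum>z\<in>Dn d n. A x z * B z y) else 0)"

definition op_id :: "nat \<Rightarrow> nat \<Rightarrow> cop" where
  "op_id d n = (\<lambda>x y. if x \<in> Dn d n \<and> x = y then 1 else 0)"

definition op_adj :: "cop \<Rightarrow> cop" where
  "op_adj A = (\<lambda>x y. cnj (A y x))"

primrec op_pow :: "nat \<Rightarrow> nat \<Rightarrow> cop \<Rightarrow> nat \<Rightarrow> cop" where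
  "op_pow d n A 0 = op_id d n"
| "op_pow d n A (Suc k) = op_mult d n A (op_pow d n A k)"

definition op_exp :: "nat \<Rightarrow> nat \<Rightarrow> cop \<Rightarrow> cop" where
  "op_exp d n A = (\<lambda>x y. \<Sum>k. op_pow d n A k x y / fact k)"

definition evol :: "nat \<Rightarrow> nat \<Rightarrow> cop \<Rightarrow> real \<Rightarrow> cop" where
  "evol d n H t = op_exp d n (\<lambda>x y. - (\<i> * complex_of_real t) * H x y)"

definition hermitian :: "nat \<Rightarrow> nat \<Rightarrow> cop \<Rightarrow> bool" where
  "hermitian d n H \<longleftrightarrow> is_op d n H \<and> op_adj H = H"

definition unitary_op :: "nat \<Rightarrow> nat \<Rightarrow> cop \<Rightarrow> bool" where
  "unitary_op d n U \<longleftrightarrow> is_op d n U \<and> op_mult d n (op_adj U) U = op_id d n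
      \<and> op_mult d n U (op_adj U) = op_id d n"

definition problem_ham :: "nat \<Rightarrow> nat \<Rightarrow> (nat list \<Rightarrow> real) \<Rightarrow> cop" where
  "problem_ham d n F = (\<lambda>x y. if x \<in> Dn d n \<and> x = y then complex_of_real (F x) else 0)"

definition vnorm2 :: "nat \<Rightarrow> nat \<Rightarrow> cvec \<Rightarrow> real" where
  "vnorm2 d n v = (\<Sum>x\<in>Dn d n. (cmod (v x))\<^sup>2)"

definition subspaceW :: "nat \<Rightarrow> nat \<Rightarrow> cvec set \<Rightarrow> bool" where
  "subspaceW d n S \<longleftrightarrow> S \<subseteq> {v. inW d n v} \<and> (\<lambda>_. 0) \<in> S
     \<and> (\<forall>u\<in>S. \<forall>v\<in>S. (\<lambda>x. u x + v x) \<in> S)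
     \<and> (\<forall>c::complex. \<forall>v\<in>S. (\<lambda>x. c * v x) \<in> S)"

definition spanW :: "nat \<Rightarrow> nat \<Rightarrow> cvec set \<Rightarrow> cvec set" where
  "spanW d n S = \<Inter>{T. subspaceW d n T \<and> S \<subseteq> T}"

definition unitary_rep :: "nat \<Rightarrow> nat \<Rightarrow> ('g, 'b) monoid_scheme \<Rightarrow> ('g \<Rightarrow> cop) \<Rightarrow> bool" where
  "unitary_rep d n K \<rho> \<longleftrightarrow> group K
     \<and> (\<forall>g\<in>carrier K. unitary_op d n (\<rho> g))
     \<and> (\<forall>g\<in>carrier K. \<forall>h\<in>carrier K. \<rho> (g \<otimes>\<^bsub>K\<^esub> h) = op_mult d n (\<rho> g) (\<rho> h))
     \<and> \<rho> \<one>\<^bsub>K\<^esub> = op_id d n"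

definition invariant :: "nat \<Rightarrow> nat \<Rightarrow> ('g, 'b) monoid_scheme \<Rightarrow> ('g \<Rightarrow> cop) \<Rightarrow> cvec set \<Rightarrow> bool" where
  "invariant d n K \<rho> S \<longleftrightarrow> (\<forall>g\<in>carrier K. \<forall>v\<in>S. op_apply d n (\<rho> g) v \<in> S)"

definition subrep :: "nat \<Rightarrow> nat \<Rightarrow> ('g, 'b) monoid_scheme \<Rightarrow> ('g \<Rightarrow> cop) \<Rightarrow> cvec set \<Rightarrow> bool" where
  "subrep d n K \<rho> S \<longleftrightarrow> subspaceW d n S \<and> invariant d n K \<rho> S"

definition irred_subrep :: "nat \<Rightarrow> nat \<Rightarrow> ('g, 'b) monoid_scheme \<Rightarrow> ('g \<Rightarrow> cop) \<Rightarrow> cvec set \<Rightarrow> bool" where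
  "irred_subrep d n K \<rho> S \<longleftrightarrow> subrep d n K \<rho> S \<and> S \<noteq> {\<lambda>_. 0}
     \<and> (\<forall>T. subrep d n K \<rho> T \<and> T \<subseteq> S \<longrightarrow> T = {\<lambda>_. 0} \<or> T = S)"

definition rep_iso :: "nat \<Rightarrow> nat \<Rightarrow> ('g, 'b) monoid_scheme \<Rightarrow> ('g \<Rightarrow> cop) \<Rightarrow> cvec set \<Rightarrow> cvec set \<Rightarrow> bool" where
  "rep_iso d n K \<rho> S T \<longleftrightarrow> (\<exists>f. bij_betw f S T
     \<and> (\<forall>u\<in>S. \<forall>v\<in>S. f (\<lambda>x. u x + v x) = (\<lambda>x. f u x + f v x))
     \<and> (\<forall>c::complex. \<forall>v\<in>S. f (\<lambda>x. c * v x) = (\<lambda>x. c * f v x))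
     \<and> (\<forall>g\<in>carrier K. \<forall>v\<in>S. f (op_apply d n (\<rho> g) v) = op_apply d n (\<rho> g) (f v)))"

definition isotypic :: "nat \<Rightarrow> nat \<Rightarrow> ('g, 'b) monoid_scheme \<Rightarrow> ('g \<Rightarrow> cop) \<Rightarrow> cvec set \<Rightarrow> cvec set" where
  "isotypic d n K \<rho> V = spanW d n (\<Union>{U. irred_subrep d n K \<rho> U \<and> rep_iso d n K \<rho> V U})"

definition eigenspace_op :: "nat \<Rightarrow> nat \<Rightarrow> cop \<Rightarrow> complex \<Rightarrow> cvec set" where
  "eigenspace_op d n H ev = {v. inW d n v \<and> op_apply d n H v = (\<lambda>x. ev * v x)}"

definition is_eigenvalue :: "nat \<Rightarrow> nat \<Rightarrow> cop \<Rightarrow> complex \<Rightarrow> bool" where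
  "is_eigenvalue d n H ev \<longleftrightarrow> eigenspace_op d n H ev \<noteq> {\<lambda>_. 0}"

definition lowest_eigenvalue :: "nat \<Rightarrow> nat \<Rightarrow> cop \<Rightarrow> real \<Rightarrow> bool" where
  "lowest_eigenvalue d n H e \<longleftrightarrow> is_eigenvalue d n H (complex_of_real e)
     \<and> (\<forall>\<mu>. is_eigenvalue d n H \<mu> \<longrightarrow> \<mu> \<in> \<real> \<and> e \<le> Re \<mu>)"

text \<open>Hypotheses of the Perron-Frobenius theorem: real nonnegative entries, irreducible
  (no proper nonzero coordinate subspace span{v_y : y in S} is invariant).\<close>
definition perron_frobenius_hyp :: "nat \<Rightarrow> nat \<Rightarrow> cop \<Rightarrow> bool" where
  "perron_frobenius_hyp d n H \<longleftrightarrow>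
     (\<forall>x\<in>Dn d n. \<forall>y\<in>Dn d n. Im (H x y) = 0 \<and> Re (H x y) \<ge> 0)
     \<and> (\<forall>S. S \<subseteq> Dn d n \<and> S \<noteq> {} \<and> S \<noteq> Dn d n \<longrightarrow>
          (\<exists>x\<in>Dn d n - S. \<exists>y\<in>S. H x y \<noteq> 0))"

text \<open>QAOA state for parameter list [(beta_1,gamma_1),...,(beta_p,gamma_p)]:
  e^{-i beta_1 H_M} e^{-i gamma_1 H_P} ... e^{-i beta_p H_M} e^{-i gamma_p H_P} xi.\<close>
primrec qaoa_state :: "nat \<Rightarrow> nat \<Rightarrow> cop \<Rightarrow> cop \<Rightarrow> (real \<times> real) list \<Rightarrow> cvec \<Rightarrow> cvec" where
  "qaoa_state d n HM HP [] \<xi> = \<xi>"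
| "qaoa_state d n HM HP (bg # ps) \<xi> =
     op_apply d n (evol d n HM (fst bg)) (op_apply d n (evol d n HP (snd bg)) (qaoa_state d n HM HP ps \<xi>))"

end

theory Submission
  imports Defs "HOL-Library.Function_Algebras"
begin


definition csc :: "complex \<Rightarrow> cvec \<Rightarrow> cvec" where "csc a f = (\<lambda>x. a * f x)"

lemma vs_csc: "vector_space csc"
  by unfold_locales (auto simp: csc_def fun_eq_iff algebra_simps)

lemma vsp_csc: "vector_space_pair csc ((*)::complex\<Rightarrow>complex\<Rightarrow>complex)"
  unfolding vector_space_pair_def using vs_csc
  by (auto simp: vector_space_def algebra_simps)

lemma finite_Dn: "finite (Dn d n)"
proof -
  have "Dn d n = {xs. set xs \<subseteq> {..<d} \<and> length xs = n}" unfolding Dn_def by auto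
  thus ?thesis using finite_lists_length_eq[of "{..<d}" n] by simp
qed

lemma sum_fun_app: "(sum f A) x = (\<Sum>a\<in>A. f a x)"
  by (induction A rule: infinite_finite_induct) (auto simp: zero_fun_def plus_fun_def)

lemma sep:
  assumes S: "subspaceW d n S" and u: "inW d n u" "u \<notin> S"
  shows "\<exists>c. (\<forall>w\<in>S. (\<Sum>x\<in>Dn d n. c x * w x) = 0) \<and> (\<Sum>x\<in>Dn d n. c x * u x) \<noteq> 0"
proof -
  interpret vs: vector_space csc by (rule vs_csc)
  interpret vp: vector_space_pair csc "(*)::complex\<Rightarrow>complex\<Rightarrow>complex" by (rule vsp_csc)
  have sub: "vs.subspace S" using S unfolding subspaceW_def vs.subspace_def csc_def
    by (auto simp: zero_fun_def plus_fun_def)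
  obtain B where B: "B \<subseteq> S" "vs.independent B" "S \<subseteq> vs.span B"
    using vs.maximal_independent_subset by blast
  have spanB: "vs.span B = S" using B sub vs.span_minimal by blast
  have "vs.independent (insert u B)" using B u spanB vs.independent_insertI by auto
  then obtain g where g: "Vector_Spaces.linear csc (*) g" "\<forall>x\<in>insert u B. g x = (\<lambda>w. if w = u then 1 else 0) x"
    using vp.linear_independent_extend[OF \<open>vs.independent (insert u B)\<close>, of "\<lambda>w. if w = u then 1 else 0"] by blast
  have gB: "\<forall>x\<in>B. g x = 0" using g(2) u(2) B(1) by auto
  have gS: "\<forall>w\<in>S. g w = 0"
    using vp.linear_eq_0_on_span[OF g(1), of B] gB spanB by blast
  have gu: "g u = 1" using g(2) by simp
  define c where "c x = g (\<lambda>y. if y = x then 1 else 0)" for x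
  have rep: "g w = (\<Sum>x\<in>Dn d n. c x * w x)" if "inW d n w" for w
  proof -
    have "w = (\<Sum>x\<in>Dn d n. csc (w x) (\<lambda>y. if y = x then 1 else 0))"
      using that finite_Dn[of d n] unfolding inW_def csc_def
      by (auto simp: fun_eq_iff sum_fun_app if_distrib cong: if_cong)
    hence "g w = (\<Sum>x\<in>Dn d n. g (csc (w x) (\<lambda>y. if y = x then 1 else 0)))"
      using module_hom.sum[OF g(1)[unfolded linear_iff_module_hom]] by metis
    also have "\<dots> = (\<Sum>x\<in>Dn d n. c x * w x)"
      using module_hom.scale[OF g(1)[unfolded linear_iff_module_hom]] unfolding c_def
      by (simp add: mult.commute)
    finally show ?thesis .
  qed
  show ?thesis
    apply (rule exI[of _ c])
    using rep gS gu u(1) S unfolding subspaceW_def by (metis mem_Collect_eq subsetD zero_neq_one)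
qed


lemma inW_op_apply: "inW d n (op_apply d n A v)"
  unfolding inW_def op_apply_def by auto

lemma op_apply_mult: "op_apply d n (op_mult d n A B) v = op_apply d n A (op_apply d n B v)"
proof -
  have "(\<Sum>y\<in>Dn d n. (\<Sum>z\<in>Dn d n. A x z * B z y) * v y) =
        (\<Sum>z\<in>Dn d n. A x z * (\<Sum>y\<in>Dn d n. B z y * v y))" for x
  proof -
    have "(\<Sum>y\<in>Dn d n. (\<Sum>z\<in>Dn d n. A x z * B z y) * v y) = (\<Sum>y\<in>Dn d n. \<Sum>z\<in>Dn d n. A x z * B z y * v y)"
      by (simp add: sum_distrib_right)
    also have "\<dots> = (\<Sum>z\<in>Dn d n. \<Sum>y\<in>Dn d n. A x z * B z y * v y)" by (rule sum.swap)
    also have "\<dots> = (\<Sum>z\<in>Dn d n. A x z * (\<Sum>y\<in>Dn d n. B z y * v y))"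
      by (simp add: sum_distrib_left mult.assoc)
    finally show ?thesis .
  qed
  thus ?thesis unfolding op_apply_def op_mult_def by (auto simp: fun_eq_iff)
qed

lemma op_apply_id: assumes "inW d n v" shows "op_apply d n (op_id d n) v = v"
proof -
  have "(\<Sum>y\<in>Dn d n. (if x \<in> Dn d n \<and> x = y then 1 else 0) * v y) = v x" if "x \<in> Dn d n" for x
  proof -
    have "(\<Sum>y\<in>Dn d n. (if x \<in> Dn d n \<and> x = y then 1 else 0) * v y) = (\<Sum>y\<in>Dn d n. if x = y then v y else 0)"
      using that by (intro sum.cong) auto
    thus ?thesis using that finite_Dn[of d n] by simp
  qed
  thus ?thesis using assms unfolding op_apply_def op_id_def inW_def by (auto simp: fun_eq_iff)
qed

lemma op_apply_add: "op_apply d n A (\<lambda>x. u x + v x) = (\<lambda>x. op_apply d n A u x + op_apply d n A v x)"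
  unfolding op_apply_def by (auto simp: fun_eq_iff distrib_left sum.distrib)

lemma op_apply_scale: "op_apply d n A (\<lambda>x. c * v x) = (\<lambda>x. c * op_apply d n A v x)"
  unfolding op_apply_def by (auto simp: fun_eq_iff sum_distrib_left algebra_simps)

lemma op_apply_scaleop: "op_apply d n (\<lambda>x y. c * A x y) v = (\<lambda>x. c * op_apply d n A v x)"
  unfolding op_apply_def by (auto simp: fun_eq_iff sum_distrib_left algebra_simps)

lemma op_apply_zero: "op_apply d n A (\<lambda>_. 0) = (\<lambda>_. 0)"
  unfolding op_apply_def by auto

lemma pow_bound:
  "cmod (op_pow d n A k x y) \<le> (\<Sum>a\<in>Dn d n. \<Sum>b\<in>Dn d n. cmod (A a b)) ^ k"
proof (induction k arbitrary: x y)
  case 0 then show ?case by (simp add: op_id_def)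
next
  case (Suc k)
  define M where "M = (\<Sum>a\<in>Dn d n. \<Sum>b\<in>Dn d n. cmod (A a b))"
  have row: "(\<Sum>z\<in>Dn d n. cmod (A x z)) \<le> M" if "x \<in> Dn d n"
    unfolding M_def using that finite_Dn[of d n]
    by (intro member_le_sum[where f="\<lambda>a. \<Sum>b\<in>Dn d n. cmod (A a b)"]) (simp_all add: sum_nonneg)
  have M0: "0 \<le> M" unfolding M_def by (simp add: sum_nonneg)
  show ?case
  proof (cases "x \<in> Dn d n \<and> y \<in> Dn d n")
    case True
    have "cmod (op_pow d n A (Suc k) x y) = cmod (\<Sum>z\<in>Dn d n. A x z * op_pow d n A k z y)"
      using True by (simp add: op_mult_def)
    also have "\<dots> \<le> (\<Sum>z\<in>Dn d n. cmod (A x z) * M ^ k)"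
    proof (rule order.trans[OF norm_sum], rule sum_mono)
    fix z assume "z \<in> Dn d n"
    show "cmod (A x z * op_pow d n A k z y) \<le> cmod (A x z) * M ^ k"
      unfolding norm_mult M_def by (rule mult_left_mono[OF Suc.IH]) simp
  qed
    also have "\<dots> = (\<Sum>z\<in>Dn d n. cmod (A x z)) * M ^ k" by (simp add: sum_distrib_right)
    also have "\<dots> \<le> M * M ^ k" using row True M0 by (intro mult_right_mono) auto
    finally show ?thesis by (simp add: M_def)
  next
    case False then show ?thesis using M0 by (auto simp: op_mult_def M_def)
  qed
qed

lemma pow_summable: "summable (\<lambda>k. op_pow d n A k x y / fact k)"
proof -
  define M where "M = (\<Sum>a\<in>Dn d n. \<Sum>b\<in>Dn d n. cmod (A a b))"
  have g: "summable (\<lambda>k. inverse (fact k) * M ^ k)" by (rule summable_exp)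
  have b: "norm (op_pow d n A k x y / fact k) \<le> inverse (fact k) * M ^ k" for k
  proof -
    have "norm (op_pow d n A k x y / fact k) = cmod (op_pow d n A k x y) / fact k"
      by (simp add: norm_divide)
    also have "\<dots> \<le> M ^ k / fact k"
      using pow_bound[of d n A k x y] unfolding M_def by (intro divide_right_mono) auto
    finally show ?thesis by (simp add: field_simps)
  qed
  have "summable (\<lambda>k. norm (op_pow d n A k x y / fact k))"
    by (rule summable_comparison_test'[where N=0, OF g]) (simp add: b)
  thus ?thesis by (rule summable_norm_cancel)
qed

lemma pow_pres:
  assumes S: "subspaceW d n S" and A: "\<forall>v\<in>S. op_apply d n A v \<in> S" and v: "v \<in> S"
  shows "op_apply d n (op_pow d n A k) v \<in> S"
proof (induction k)
  case 0 then show ?case using S v by (simp add: op_apply_id subspaceW_def subset_iff)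
next
  case (Suc k) then show ?case using A by (simp add: op_apply_mult)
qed

lemma exp_pres:
  assumes S: "subspaceW d n S" and A: "\<forall>v\<in>S. op_apply d n A v \<in> S" and v: "v \<in> S"
  shows "op_apply d n (op_exp d n A) v \<in> S"
proof (rule ccontr)
  let ?u = "op_apply d n (op_exp d n A) v"
  let ?a = "\<lambda>k. op_apply d n (op_pow d n A k) v"
  assume "?u \<notin> S"
  then obtain c where c: "\<forall>w\<in>S. (\<Sum>x\<in>Dn d n. c x * w x) = 0" "(\<Sum>x\<in>Dn d n. c x * ?u x) \<noteq> 0"
    using sep[OF S inW_op_apply] by blast
  have ux: "?u x = (\<Sum>k. ?a k x / fact k)" if "x \<in> Dn d n" for x
  proof -
    have "?u x = (\<Sum>y\<in>Dn d n. (\<Sum>k. op_pow d n A k x y / fact k) * v y)"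
      using that by (simp add: op_apply_def op_exp_def)
    also have "\<dots> = (\<Sum>y\<in>Dn d n. (\<Sum>k. op_pow d n A k x y / fact k * v y))"
      by (intro sum.cong refl) (simp add: suminf_mult2 pow_summable)
    also have "\<dots> = (\<Sum>k. \<Sum>y\<in>Dn d n. op_pow d n A k x y / fact k * v y)"
      by (intro suminf_sum[symmetric] summable_mult2 pow_summable)
    also have "\<dots> = (\<Sum>k. ?a k x / fact k)"
      using that by (simp add: op_apply_def sum_divide_distrib)
    finally show ?thesis .
  qed
  have summ: "summable (\<lambda>k. ?a k x / fact k)" if "x \<in> Dn d n" for x
  proof -
    have "summable (\<lambda>k. \<Sum>y\<in>Dn d n. op_pow d n A k x y / fact k * v y)"
      by (intro summable_sum summable_mult2 pow_summable)
    thus ?thesis using that by (simp add: op_apply_def sum_divide_distrib)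
  qed
  have "(\<Sum>x\<in>Dn d n. c x * ?u x) = (\<Sum>x\<in>Dn d n. \<Sum>k. c x * (?a k x / fact k))"
  proof (rule sum.cong[OF refl])
    fix x assume x: "x \<in> Dn d n"
    show "c x * ?u x = (\<Sum>k. c x * (?a k x / fact k))"
      unfolding ux[OF x] by (rule suminf_mult[OF summ[OF x], symmetric])
  qed
  also have "\<dots> = (\<Sum>k. \<Sum>x\<in>Dn d n. c x * (?a k x / fact k))"
    by (intro suminf_sum[symmetric] summable_mult summ) 
  also have "\<dots> = (\<Sum>k. (\<Sum>x\<in>Dn d n. c x * ?a k x) / fact k)"
    by (simp only: times_divide_eq_right sum_divide_distrib[symmetric])
  also have "\<dots> = 0"
  proof -
    have "\<And>k. (\<Sum>x\<in>Dn d n. c x * ?a k x) = 0" using c(1) pow_pres[OF S A v] by blast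
    thus ?thesis by simp
  qed
  finally show False using c(2) by simp
qed



lemma spanW_subspace:
  assumes "X \<subseteq> Collect (inW d n)" shows "subspaceW d n (spanW d n X)"
proof -
  have W: "subspaceW d n (Collect (inW d n))" unfolding subspaceW_def inW_def by auto
  let ?F = "{T. subspaceW d n T \<and> X \<subseteq> T}"
  have F: "\<And>T. T \<in> ?F \<Longrightarrow> subspaceW d n T" by simp
  have WF: "Collect (inW d n) \<in> ?F" using W assms by simp
  show ?thesis unfolding subspaceW_def[of d n "spanW d n X"] unfolding spanW_def
  proof (intro conjI ballI allI)
    show "\<Inter>?F \<subseteq> Collect (inW d n)" using WF by blast
    show "(\<lambda>_. 0) \<in> \<Inter>?F" using F unfolding subspaceW_def by blast
    fix u v assume "u \<in> \<Inter>?F" "v \<in> \<Inter>?F"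
    thus "(\<lambda>x. u x + v x) \<in> \<Inter>?F" using F unfolding subspaceW_def by blast
  next
    fix c v assume "v \<in> \<Inter>?F"
    thus "(\<lambda>x. c * v x) \<in> \<Inter>?F" using F unfolding subspaceW_def by blast
  qed
qed

lemma spanW_min: "subspaceW d n T \<Longrightarrow> X \<subseteq> T \<Longrightarrow> spanW d n X \<subseteq> T"
  unfolding spanW_def by auto

lemma spanW_sup: "X \<subseteq> spanW d n X"
  unfolding spanW_def by auto

lemma preimage_subspace:
  assumes T: "subspaceW d n T"
  shows "subspaceW d n {v. inW d n v \<and> op_apply d n A v \<in> T}"
  using T unfolding subspaceW_def
  by (auto simp: op_apply_add op_apply_scale op_apply_zero inW_def)

lemma commute_apply:
  assumes "op_mult d n G H = op_mult d n H G"
  shows "op_apply d n G (op_apply d n H u) = op_apply d n H (op_apply d n G u)"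
  by (metis assms op_apply_mult)

lemma image_in_isotypic:
  assumes U: "irred_subrep d n K \<rho> U" and iso: "rep_iso d n K \<rho> V U"
    and com: "\<forall>g\<in>carrier K. op_mult d n (\<rho> g) H = op_mult d n H (\<rho> g)"
  shows "op_apply d n H ` U \<subseteq> isotypic d n K \<rho> V"
proof -
  let ?Z = "\<lambda>_. 0 :: complex"
  let ?h = "op_apply d n H"
  have USub: "subspaceW d n U" and Uinv: "invariant d n K \<rho> U" and Unz: "U \<noteq> {?Z}"
    and Umin: "\<And>T. subrep d n K \<rho> T \<Longrightarrow> T \<subseteq> U \<Longrightarrow> T = {?Z} \<or> T = U"
    using U unfolding irred_subrep_def subrep_def by auto
  have U0: "?Z \<in> U" and Uadd: "\<And>u v. u \<in> U \<Longrightarrow> v \<in> U \<Longrightarrow> (\<lambda>x. u x + v x) \<in> U"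
    and Usc: "\<And>c v. v \<in> U \<Longrightarrow> (\<lambda>x. c * v x) \<in> U" and UW: "\<And>u. u \<in> U \<Longrightarrow> inW d n u"
    using USub unfolding subspaceW_def by auto
  have Ug: "\<And>g u. g \<in> carrier K \<Longrightarrow> u \<in> U \<Longrightarrow> op_apply d n (\<rho> g) u \<in> U"
    using Uinv unfolding invariant_def by auto
  have hcom: "\<And>g u. g \<in> carrier K \<Longrightarrow> op_apply d n (\<rho> g) (?h u) = ?h (op_apply d n (\<rho> g) u)"
    using com commute_apply by blast
  define Ker where "Ker = {u\<in>U. ?h u = ?Z}"
  have "subrep d n K \<rho> Ker"
    unfolding subrep_def subspaceW_def invariant_def Ker_def
    using U0 Uadd Usc UW Ug
    by (auto simp: op_apply_add op_apply_scale op_apply_zero hcom[symmetric])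
  hence "Ker = {?Z} \<or> Ker = U" using Umin unfolding Ker_def by auto
  moreover have isub: "subspaceW d n (isotypic d n K \<rho> V)"
    unfolding isotypic_def
    by (rule spanW_subspace) (auto simp: irred_subrep_def subrep_def subspaceW_def)
  moreover
  { assume "Ker = U"
    hence "?h ` U \<subseteq> {?Z}" unfolding Ker_def by auto
    hence ?thesis using isub unfolding subspaceW_def by auto
  }
  moreover
  { assume K0: "Ker = {?Z}"
    let ?I = "?h ` U"
    have inj: "inj_on ?h U"
    proof (rule inj_onI)
      fix u v assume uv: "u \<in> U" "v \<in> U" "?h u = ?h v"
      have m: "(\<lambda>x. u x + (-1) * v x) \<in> U" using uv Uadd Usc by blast
      have "?h (\<lambda>x. u x + (-1) * v x) = (\<lambda>x. ?h u x + (-1) * ?h v x)"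
        by (simp only: op_apply_add op_apply_scale)
      hence "?h (\<lambda>x. u x + (-1) * v x) = ?Z"
        using uv(3) by simp
      hence "(\<lambda>x. u x + (-1) * v x) \<in> Ker" using m unfolding Ker_def by auto
      hence "(\<lambda>x. u x + (-1) * v x) = ?Z" using K0 by auto
      thus "u = v" by (auto simp: fun_eq_iff dest: fun_cong)
    qed
    have Isub: "subspaceW d n ?I"
      unfolding subspaceW_def
    proof (intro conjI ballI allI)
      show "?I \<subseteq> Collect (inW d n)" using inW_op_apply by auto
      show "?Z \<in> ?I" using U0 op_apply_zero by (metis image_eqI)
      fix a b assume "a \<in> ?I" "b \<in> ?I"
      then obtain u v where "u \<in> U" "v \<in> U" "a = ?h u" "b = ?h v" by auto
      hence "(\<lambda>x. a x + b x) = ?h (\<lambda>x. u x + v x)" by (simp add: op_apply_add)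
      thus "(\<lambda>x. a x + b x) \<in> ?I" using Uadd[OF \<open>u \<in> U\<close> \<open>v \<in> U\<close>] by blast
    next
      fix c a assume "a \<in> ?I"
      then obtain u where "u \<in> U" "a = ?h u" by auto
      hence "(\<lambda>x. c * a x) = ?h (\<lambda>x. c * u x)" by (simp add: op_apply_scale)
      thus "(\<lambda>x. c * a x) \<in> ?I" using Usc[OF \<open>u \<in> U\<close>] by blast
    qed
    have Iinv: "invariant d n K \<rho> ?I"
      unfolding invariant_def
    proof (intro ballI)
      fix g w assume g: "g \<in> carrier K" and w: "w \<in> ?I"
      then obtain u where u: "u \<in> U" "w = ?h u" by blast
      have "op_apply d n (\<rho> g) w = ?h (op_apply d n (\<rho> g) u)" using hcom[OF g] u(2) by simp
      thus "op_apply d n (\<rho> g) w \<in> ?I" using Ug[OF g u(1)] by blast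
    qed
    have Inz: "?I \<noteq> {?Z}"
    proof
      assume "?I = {?Z}"
      hence "U \<subseteq> Ker" unfolding Ker_def by auto
      hence "U = {?Z}" using K0 U0 by blast
      thus False using Unz by simp
    qed
    have Imin: "T = {?Z} \<or> T = ?I" if T: "subrep d n K \<rho> T" "T \<subseteq> ?I" for T
    proof -
      define T' where "T' = {u\<in>U. ?h u \<in> T}"
      have TS: "subspaceW d n T" and Tinv: "invariant d n K \<rho> T" using T unfolding subrep_def by auto
      have "subrep d n K \<rho> T'"
        unfolding subrep_def T'_def invariant_def
      proof (intro conjI ballI)
        show "subspaceW d n {u \<in> U. ?h u \<in> T}"
          using USub TS unfolding subspaceW_def
          by (auto simp: op_apply_add op_apply_scale op_apply_zero)
        fix g v assume "g \<in> carrier K" "v \<in> {u \<in> U. ?h u \<in> T}"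
        thus "op_apply d n (\<rho> g) v \<in> {u \<in> U. ?h u \<in> T}"
          using Ug Tinv unfolding invariant_def by (auto simp: hcom[symmetric])
      qed
      hence "T' = {?Z} \<or> T' = U" using Umin unfolding T'_def by auto
      moreover have "?Z \<in> T" using TS unfolding subspaceW_def by auto
      moreover have "T = ?h ` T'" using T(2) unfolding T'_def by auto
      ultimately show ?thesis by (auto simp: op_apply_zero)
    qed
    have Iirr: "irred_subrep d n K \<rho> ?I"
      unfolding irred_subrep_def subrep_def using Isub Iinv Inz Imin by (auto simp: subrep_def)
    obtain f where f: "bij_betw f V U"
      "\<forall>u\<in>V. \<forall>v\<in>V. f (\<lambda>x. u x + v x) = (\<lambda>x. f u x + f v x)"
      "\<forall>c::complex. \<forall>v\<in>V. f (\<lambda>x. c * v x) = (\<lambda>x. c * f v x)"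
      "\<forall>g\<in>carrier K. \<forall>v\<in>V. f (op_apply d n (\<rho> g) v) = op_apply d n (\<rho> g) (f v)"
      using iso unfolding rep_iso_def by blast
    have "rep_iso d n K \<rho> V ?I"
      unfolding rep_iso_def
    proof (rule exI[of _ "?h \<circ> f"], intro conjI ballI allI)
      show "bij_betw (?h \<circ> f) V ?I"
        using f(1) inj by (intro bij_betw_trans) (auto simp: bij_betw_def)
    next
      fix u v assume "u \<in> V" "v \<in> V"
      thus "(?h \<circ> f) (\<lambda>x. u x + v x) = (\<lambda>x. (?h \<circ> f) u x + (?h \<circ> f) v x)"
        using f(2) by (simp add: op_apply_add)
    next
      fix c v assume "v \<in> V"
      thus "(?h \<circ> f) (\<lambda>x. c * v x) = (\<lambda>x. c * (?h \<circ> f) v x)"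
        using f(3) by (simp add: op_apply_scale)
    next
      fix g v assume "g \<in> carrier K" "v \<in> V"
      thus "(?h \<circ> f) (op_apply d n (\<rho> g) v) = op_apply d n (\<rho> g) ((?h \<circ> f) v)"
        using f(4) by (simp add: hcom)
    qed
    hence "?I \<subseteq> \<Union>{U. irred_subrep d n K \<rho> U \<and> rep_iso d n K \<rho> V U}" using Iirr by blast
    hence ?thesis unfolding isotypic_def using spanW_sup by blast
  }
  ultimately show ?thesis by blast
qed

lemma isotypic_pres:
  assumes com: "\<forall>g\<in>carrier K. op_mult d n (\<rho> g) H = op_mult d n H (\<rho> g)"
  shows "\<forall>v\<in>isotypic d n K \<rho> V. op_apply d n H v \<in> isotypic d n K \<rho> V"
proof -
  let ?X = "\<Union>{U. irred_subrep d n K \<rho> U \<and> rep_iso d n K \<rho> V U}"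
  have XW: "?X \<subseteq> Collect (inW d n)"
    by (auto simp: irred_subrep_def subrep_def subspaceW_def)
  have isub: "subspaceW d n (isotypic d n K \<rho> V)"
    unfolding isotypic_def by (rule spanW_subspace[OF XW])
  have "?X \<subseteq> {v. inW d n v \<and> op_apply d n H v \<in> isotypic d n K \<rho> V}"
    using image_in_isotypic[OF _ _ com] XW by blast
  hence "spanW d n ?X \<subseteq> {v. inW d n v \<and> op_apply d n H v \<in> isotypic d n K \<rho> V}"
    by (intro spanW_min preimage_subspace isub)
  thus ?thesis unfolding isotypic_def by auto
qed


theorem mainTheorem1:
  fixes d n :: nat and F :: "nat list \<Rightarrow> real"
    and K :: "('g, 'b) monoid_scheme" and \<rho> :: "'g \<Rightarrow> cop"
    and Vi :: "cvec set" and HM :: cop and e0 :: real and \<xi> :: cvec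
    and params :: "(real \<times> real) list"
  assumes "d \<ge> 1" and "n \<ge> 1"
    and rep: "unitary_rep d n K \<rho>"
    and sym: "\<forall>g\<in>carrier K. op_mult d n (\<rho> g) (problem_ham d n F) = op_mult d n (problem_ham d n F) (\<rho> g)"
    and Vi: "irred_subrep d n K \<rho> Vi"
    and herm: "hermitian d n HM"
    and PF: "perron_frobenius_hyp d n HM"
    and low: "lowest_eigenvalue d n HM e0"
    and onedim: "\<exists>v. v \<noteq> (\<lambda>_. 0) \<and> eigenspace_op d n HM (complex_of_real e0) = {(\<lambda>x. c * v x) | c. True}"
    and inWi: "eigenspace_op d n HM (complex_of_real e0) \<subseteq> isotypic d n K \<rho> Vi"
    and preserves: "\<forall>U. irred_subrep d n K \<rho> U \<longrightarrow>
        (\<forall>v\<in>isotypic d n K \<rho> U. op_apply d n HM v \<in> isotypic d n K \<rho> U)"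
    and xi: "\<xi> \<in> eigenspace_op d n HM (complex_of_real e0)" "vnorm2 d n \<xi> = 1"
    and p: "length params \<ge> 1"
  shows "qaoa_state d n HM (problem_ham d n F) params \<xi> \<in> isotypic d n K \<rho> Vi"
  proof -
  let ?S = "isotypic d n K \<rho> Vi"
  have XW: "\<Union>{U. irred_subrep d n K \<rho> U \<and> rep_iso d n K \<rho> Vi U} \<subseteq> Collect (inW d n)"
    by (auto simp: irred_subrep_def subrep_def subspaceW_def)
  have Ssub: "subspaceW d n ?S" unfolding isotypic_def by (rule spanW_subspace[OF XW])
  have HMp: "\<forall>v\<in>?S. op_apply d n HM v \<in> ?S" using preserves Vi by blast
  have HPp: "\<forall>v\<in>?S. op_apply d n (problem_ham d n F) v \<in> ?S" by (rule isotypic_pres[OF sym])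
  have ev: "op_apply d n (evol d n H t) v \<in> ?S"
    if H: "\<forall>v\<in>?S. op_apply d n H v \<in> ?S" and v: "v \<in> ?S" for H t v
  proof -
    have "\<forall>w\<in>?S. op_apply d n (\<lambda>x y. - (\<i> * complex_of_real t) * H x y) w \<in> ?S"
      using H Ssub unfolding subspaceW_def
      by (subst op_apply_scaleop[of d n "- (\<i> * complex_of_real t)"]) blast
    thus ?thesis unfolding evol_def by (rule exp_pres[OF Ssub _ v])
  qed
  have xiS: "\<xi> \<in> ?S" using xi(1) inWi by blast
  have "qaoa_state d n HM (problem_ham d n F) ps \<xi> \<in> ?S" for ps
    by (induction ps) (simp_all add: xiS ev HMp HPp)
  thus ?thesis .
qed

end
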